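(* Let $Q\succeq0$, $q\in\mathbb{R}^n$, $A\succ0$, $v\in\mathbb{R}^n$, and let $m>0$ satisfy Requirement 2 (see context). Let $k\in\mathbb{N}$ and $0<\gamma_k\le 1/L_k$. If $x_k\in\mathcal{C}$, then $x_{k+1}:=x_k-\gamma_k\nabla J_k(x_k)\in\mathcal{C}$. That is, $\mathcal{C}$ is positively invariant under the gradient step.
   Context: $Q\in\mathbb{R}^{n\times n}$ symmetric positive semidefinite, $A\in\mathbb{R}^{n\times n}$ symmetric positive definite. $f(x)=\tfrac12 x^\top Qx+q^\top x$, $g(x)=(x-v)^\top A(x-v)$, $\mathcal{C}=\{x:g(x)\le1\}$, $\partial\mathcal{C}=\{x:g(x)=1\}$, $J_k(x)=f(x)+\frac{m}{k}g(x)^k$ for $k\in\mathbb{N}=\{1,2,\dots\}$, $L_k=\bar\sigma(Q+m(4k-2)A)$ (in particular $L_1=\bar\sigma(Q+2mA)$), where $\bar\sigma,\underline\sigma$ denote largest/smallest singular value. Let $r=\sqrt{\underline\sigma(A)}/\bar\sigma(A)$. Requirement 2: with $w(x)=\nabla f(x)+m\nabla g(x)$, for every $x\in\partial\mathcal{C}$ one has $\|w(x)\|\le 2rL_1\cos\phi(x)$, where $\cos\phi(x)=\frac{\langle w(x),\nabla g(x)\rangle}{\|w(x)\|\,\|\nabla g(x)\|}$ (equivalently, $\|w(x)\|^2\|\nabla g(x)\|\le 2rL_1\langle w(x),\nabla g(x)\rangle$ for all $x\in\partial\mathcal{C}$, which also covers $w(x)=0$). (The paper phrases this as $m\ge m_{\mathrm{inv}}$,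 the smallest $m\ge0$ satisfying this condition.) Requirement 2 implies $\langle\nabla g(x),w(x)\rangle\ge0$ on $\partial\mathcal{C}$. *)

theory Defs
  imports "HOL-Analysis.Analysis"
begin

definition mat_eigenvalues :: "real^'n^'n \<Rightarrow> real set" where
  "mat_eigenvalues M = {l. \<exists>x. x \<noteq> 0 \<and> M *v x = l *\<^sub>R x}"

definition sigma_max :: "real^'n^'n \<Rightarrow> real" where
  "sigma_max M = sqrt (Max (mat_eigenvalues (transpose M ** M)))"

definition sigma_min :: "real^'n^'n \<Rightarrow> real" where
  "sigma_min M = sqrt (Min (mat_eigenvalues (transpose M ** M)))"

definition sym_psd :: "real^'n^'n \<Rightarrow> bool" where
  "sym_psd M \<longleftrightarrow> transpose M = M \<and> (\<forall>x. 0 \<le> x \<bullet> (M *v x))"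

definition sym_pd :: "real^'n^'n \<Rightarrow> bool" where
  "sym_pd M \<longleftrightarrow> transpose M = M \<and> (\<forall>x. x \<noteq> 0 \<longrightarrow> 0 < x \<bullet> (M *v x))"

definition fobj :: "real^'n^'n \<Rightarrow> real^'n \<Rightarrow> real^'n \<Rightarrow> real" where
  "fobj Q q x = (1/2) * (x \<bullet> (Q *v x)) + q \<bullet> x"

definition gcon :: "real^'n^'n \<Rightarrow> real^'n \<Rightarrow> real^'n \<Rightarrow> real" where
  "gcon A v x = (x - v) \<bullet> (A *v (x - v))"

definition grad_f :: "real^'n^'n \<Rightarrow> real^'n \<Rightarrow> real^'n \<Rightarrow> real^'n" where
  "grad_f Q q x = Q *v x + q"

definition grad_g :: "real^'n^'n \<Rightarrow> real^'n \<Rightarrow> real^'n \<Rightarrow> real^'n" where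
  "grad_g A v x = 2 *\<^sub>R (A *v (x - v))"

definition Jk :: "real^'n^'n \<Rightarrow> real^'n \<Rightarrow> real^'n^'n \<Rightarrow> real^'n \<Rightarrow> real \<Rightarrow> nat \<Rightarrow> real^'n \<Rightarrow> real" where
  "Jk Q q A v m k x = fobj Q q x + (m / real k) * (gcon A v x) ^ k"

definition grad_Jk :: "real^'n^'n \<Rightarrow> real^'n \<Rightarrow> real^'n^'n \<Rightarrow> real^'n \<Rightarrow> real \<Rightarrow> nat \<Rightarrow> real^'n \<Rightarrow> real^'n" where
  "grad_Jk Q q A v m k x = grad_f Q q x + (m * (gcon A v x) ^ (k - 1)) *\<^sub>R grad_g A v x"

definition Lk :: "real^'n^'n \<Rightarrow> real^'n^'n \<Rightarrow> real \<Rightarrow> nat \<Rightarrow> real" where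
  "Lk Q A m k = sigma_max (Q + (m * (4 * real k - 2)) *\<^sub>R A)"

definition rA :: "real^'n^'n \<Rightarrow> real" where
  "rA A = sqrt (sigma_min A) / sigma_max A"

text \<open>Requirement 2, in the form covering w(x) = 0.\<close>

definition requirement2 :: "real^'n^'n \<Rightarrow> real^'n \<Rightarrow> real^'n^'n \<Rightarrow> real^'n \<Rightarrow> real \<Rightarrow> bool" where
  "requirement2 Q q A v m \<longleftrightarrow>
     (\<forall>x. gcon A v x = 1 \<longrightarrow>
        (let w = grad_f Q q x + m *\<^sub>R grad_g A v x in
           (norm w)\<^sup>2 * norm (grad_g A v x) \<le> 2 * rA A * Lk Q A m 1 * (w \<bullet> grad_g A v x)))"

end

theory Submission
  imports Defs
begin


lemma sym_dot:
  fixes M :: "real^'n^'n"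
  assumes "transpose M = M"
  shows "x \<bullet> (M *v y) = (M *v x) \<bullet> y"
proof -
  have "x \<bullet> (M *v y) = (x v* M) \<bullet> y" by (simp add: dot_lmul_matrix)
  also have "x v* M = M *v x" using vector_transpose_matrix[of x M] assms by simp
  finally show ?thesis .
qed

lemma quad_zero:
  fixes a b :: real
  assumes "\<And>t. 0 \<le> 2*t*a + t^2*b"
  shows "a = 0"
proof (rule ccontr)
  assume "a \<noteq> 0"
  define ss where "ss = \<bar>b\<bar>+1"
  define t where "t = -a/ss"
  have p: "ss > 0" unfolding ss_def by simp
  have ts: "t * ss = -a" unfolding t_def using p by simp
  have "0 \<le> 2*t*a + t^2*b" by (rule assms)
  hence "0 \<le> (2*t*a + t^2*b) * ss^2" by simp
  also have "(2*t*a + t^2*b) * ss^2 = 2*(t * ss)*a * ss + (t * ss)^2*b"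
    by (simp add: power2_eq_square algebra_simps)
  also have "\<dots> = a^2 * (b - 2 * ss)"
    unfolding ts by (simp add: power2_eq_square algebra_simps)
  also have "\<dots> < 0"
  proof -
    have "b - 2 * ss < 0" unfolding ss_def by (cases "b \<ge> 0") auto
    moreover have "a^2 > 0" using \<open>a \<noteq> 0\<close> by simp
    ultimately show ?thesis by (simp add: mult_pos_neg)
  qed
  finally show False by simp
qed

lemma cont_quad: "continuous_on S (\<lambda>w::real^'n. w \<bullet> (B *v w))"
  by (intro continuous_intros linear_continuous_on matrix_vector_mul_bounded_linear)

lemma rayleigh_max:
  fixes B :: "real^'n^'n"
  assumes sym: "transpose B = B"
  shows "\<exists>l z. z \<noteq> 0 \<and> B *v z = l *\<^sub>R z \<and> (\<forall>w. w \<bullet> (B *v w) \<le> l * (w \<bullet> w))"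
proof -
  obtain i :: 'n where True by simp
  have ne: "sphere (0::real^'n) 1 \<noteq> {}"
    using norm_axis_1[of i] by (metis dist_0_norm mem_sphere empty_iff)
  obtain z where z: "z \<in> sphere 0 1" and zmax: "\<forall>y\<in>sphere 0 1. y \<bullet> (B *v y) \<le> z \<bullet> (B *v z)"
    using continuous_attains_sup[OF compact_sphere ne cont_quad] by blast
  define l where "l = z \<bullet> (B *v z)"
  have nz: "norm z = 1" using z by simp
  have zz: "z \<bullet> z = 1" using nz by (simp add: dot_square_norm)
  have bound: "w \<bullet> (B *v w) \<le> l * (w \<bullet> w)" for w
  proof (cases "w = 0")
    case True then show ?thesis by simp
  next
    case False
    define c where "c = 1 / norm w"
    have c: "c > 0" using False by (simp add: c_def)
    have "(c *\<^sub>R w) \<in> sphere 0 1" using False by (simp add: c_def)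
    hence "(c *\<^sub>R w) \<bullet> (B *v (c *\<^sub>R w)) \<le> l" using zmax l_def by blast
    hence "c^2 * (w \<bullet> (B *v w)) \<le> l" by (simp add: matrix_vector_mult_scaleR power2_eq_square)
    hence "c^2 * (w \<bullet> (B *v w)) * (norm w)^2 \<le> l * (norm w)^2" by (simp add: mult_right_mono)
    moreover have "c^2 * (norm w)^2 = 1" using False by (simp add: c_def power2_eq_square)
    ultimately have "w \<bullet> (B *v w) \<le> l * (norm w)^2" by (metis mult.commute mult.left_commute mult.right_neutral)
    thus ?thesis by (simp add: power2_norm_eq_inner)
  qed
  have eig: "B *v z = l *\<^sub>R z"
  proof -
    define e where "e = l *\<^sub>R z - B *v z"
    have "\<forall>t. 0 \<le> 2*t*(e \<bullet> e) + t^2*(l*(e \<bullet> e) - e \<bullet> (B *v e))"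
    proof
      fix t :: real
      have i1: "(z + t *\<^sub>R e) \<bullet> (B *v (z + t *\<^sub>R e)) \<le> l * ((z + t *\<^sub>R e) \<bullet> (z + t *\<^sub>R e))"
        by (rule bound)
      have bz: "z \<bullet> (B *v e) = e \<bullet> (B *v z)"
        using sym_dot[OF sym, of z e] by (simp add: inner_commute)
      have "(z + t *\<^sub>R e) \<bullet> (B *v (z + t *\<^sub>R e)) = z \<bullet> (B *v z) + t*(z \<bullet> (B *v e)) + t*(e \<bullet> (B *v z)) + t^2 * (e \<bullet> (B *v e))"
        by (simp add: matrix_vector_right_distrib matrix_vector_mult_scaleR inner_add_left inner_add_right power2_eq_square algebra_simps)
      hence i2: "(z + t *\<^sub>R e) \<bullet> (B *v (z + t *\<^sub>R e)) = l + 2*t*(e \<bullet> (B *v z)) + t^2 * (e \<bullet> (B *v e))"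
        using bz l_def by simp
      have "(z + t *\<^sub>R e) \<bullet> (z + t *\<^sub>R e) = z \<bullet> z + t*(z \<bullet> e) + t*(e \<bullet> z) + t^2*(e \<bullet> e)"
        by (simp add: inner_add_left inner_add_right power2_eq_square algebra_simps)
      hence i3: "(z + t *\<^sub>R e) \<bullet> (z + t *\<^sub>R e) = 1 + 2*t*(e \<bullet> z) + t^2*(e \<bullet> e)"
        using zz by (simp add: inner_commute)
      have "e \<bullet> e = e \<bullet> (l *\<^sub>R z - B *v z)" by (simp add: e_def)
      hence i4: "e \<bullet> e = l * (e \<bullet> z) - e \<bullet> (B *v z)"
        by (simp add: inner_diff_right)
      have "0 \<le> l * (1 + 2*t*(e \<bullet> z) + t^2*(e \<bullet> e)) - (l + 2*t*(e \<bullet> (B *v z)) + t^2 * (e \<bullet> (B *v e)))"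
        using i1 i2 i3 by simp
      also have "\<dots> = 2*t*(l * (e \<bullet> z) - e \<bullet> (B *v z)) + t^2*(l*(e \<bullet> e) - e \<bullet> (B *v e))"
        by (simp add: algebra_simps)
      finally show "0 \<le> 2*t*(e \<bullet> e) + t^2*(l*(e \<bullet> e) - e \<bullet> (B *v e))" using i4 by simp
    qed
    hence "e \<bullet> e = 0" using quad_zero by blast
    thus ?thesis unfolding e_def by simp
  qed
  show ?thesis using eig bound nz by (intro exI[of _ l] exI[of _ z]) auto
qed


lemma eig_finite:
  fixes B :: "real^'n^'n"
  assumes sym: "transpose B = B"
  shows "finite (mat_eigenvalues B)"
proof -
  define f where "f l = (SOME x. x \<noteq> 0 \<and> B *v x = l *\<^sub>R x)" for l
  have fP: "f l \<noteq> 0 \<and> B *v f l = l *\<^sub>R f l" if "l \<in> mat_eigenvalues B" for l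
    using someI_ex[of "\<lambda>x. x \<noteq> 0 \<and> B *v x = l *\<^sub>R x"] that unfolding mat_eigenvalues_def f_def by blast
  have inj: "inj_on f (mat_eigenvalues B)"
  proof (rule inj_onI)
    fix a b assume a: "a \<in> mat_eigenvalues B" and b: "b \<in> mat_eigenvalues B" and e: "f a = f b"
    have "a *\<^sub>R f a = b *\<^sub>R f a" using fP[OF a] fP[OF b] e by metis
    thus "a = b" using fP[OF a] by simp
  qed
  have orth: "pairwise orthogonal (f ` mat_eigenvalues B)"
  proof (rule pairwiseI)
    fix x y assume x: "x \<in> f ` mat_eigenvalues B" and y: "y \<in> f ` mat_eigenvalues B" and ne: "x \<noteq> y"
    obtain a where a: "a \<in> mat_eigenvalues B" "x = f a" using x by blast
    obtain b where b: "b \<in> mat_eigenvalues B" "y = f b" using y by blast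
    have ab: "a \<noteq> b" using ne a b by blast
    have "a * (x \<bullet> y) = (B *v x) \<bullet> y" using fP[OF a(1)] a(2) by simp
    also have "\<dots> = x \<bullet> (B *v y)" using sym_dot[OF sym] by simp
    also have "\<dots> = b * (x \<bullet> y)" using fP[OF b(1)] b(2) by simp
    finally have "(a - b) * (x \<bullet> y) = 0" by (simp add: algebra_simps)
    thus "orthogonal x y" using ab by (simp add: orthogonal_def)
  qed
  have "0 \<notin> f ` mat_eigenvalues B" using fP by auto
  hence "independent (f ` mat_eigenvalues B)" using pairwise_orthogonal_independent orth by blast
  hence "finite (f ` mat_eigenvalues B)" by (rule finiteI_independent)
  thus ?thesis using finite_imageD inj by blast
qed

lemma eig_max:
  fixes B :: "real^'n^'n"
  assumes sym: "transpose B = B"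
  shows "mat_eigenvalues B \<noteq> {}" and "w \<bullet> (B *v w) \<le> Max (mat_eigenvalues B) * (w \<bullet> w)"
proof -
  obtain l z where z: "z \<noteq> 0" "B *v z = l *\<^sub>R z" and b: "\<forall>w. w \<bullet> (B *v w) \<le> l * (w \<bullet> w)"
    using rayleigh_max[OF sym] by blast
  have l: "l \<in> mat_eigenvalues B" using z unfolding mat_eigenvalues_def by blast
  thus "mat_eigenvalues B \<noteq> {}" by blast
  have "l \<le> Max (mat_eigenvalues B)" using eig_finite[OF sym] l by simp
  moreover have "0 \<le> w \<bullet> w" by simp
  ultimately have "l * (w \<bullet> w) \<le> Max (mat_eigenvalues B) * (w \<bullet> w)" by (rule mult_right_mono)
  thus "w \<bullet> (B *v w) \<le> Max (mat_eigenvalues B) * (w \<bullet> w)" using b by (meson order_trans)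
qed

lemma eig_min:
  fixes B :: "real^'n^'n"
  assumes sym: "transpose B = B"
  shows "Min (mat_eigenvalues B) * (w \<bullet> w) \<le> w \<bullet> (B *v w)"
proof -
  have sym': "transpose (-B) = -B" using sym by (simp add: transpose_def vec_eq_iff)
  have neg: "(-B) *v x = - (B *v x)" for x by (simp add: matrix_vector_mult_def vec_eq_iff sum_negf)
  obtain l z where z: "z \<noteq> 0" "(-B) *v z = l *\<^sub>R z" and b: "\<forall>w. w \<bullet> ((-B) *v w) \<le> l * (w \<bullet> w)"
    using rayleigh_max[OF sym'] by blast
  have "B *v z = (-l) *\<^sub>R z" using z(2) neg[of z] by (metis minus_equation_iff scaleR_minus_left)
  hence l: "-l \<in> mat_eigenvalues B" using z unfolding mat_eigenvalues_def by blast
  have "Min (mat_eigenvalues B) \<le> -l" using eig_finite[OF sym] l by simp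
  moreover have "0 \<le> w \<bullet> w" by simp
  ultimately have "Min (mat_eigenvalues B) * (w \<bullet> w) \<le> (-l) * (w \<bullet> w)" by (rule mult_right_mono)
  moreover have "(-l) * (w \<bullet> w) \<le> w \<bullet> (B *v w)" using b[rule_format, of w] neg[of w] by simp
  ultimately show ?thesis by linarith
qed

lemma eig_Max_in:
  fixes B :: "real^'n^'n"
  assumes sym: "transpose B = B"
  shows "Max (mat_eigenvalues B) \<in> mat_eigenvalues B" "Min (mat_eigenvalues B) \<in> mat_eigenvalues B"
  using eig_finite[OF sym] eig_max(1)[OF sym] by auto


lemma MtM:
  fixes M :: "real^'n^'n"
  assumes sym: "transpose M = M"
  shows "transpose (transpose M ** M) = transpose M ** M"
    and "w \<bullet> ((transpose M ** M) *v w) = (M *v w) \<bullet> (M *v w)"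
proof -
  show "transpose (transpose M ** M) = transpose M ** M" by (simp only: matrix_transpose_mul transpose_transpose)
  have "w \<bullet> ((transpose M ** M) *v w) = w \<bullet> (M *v (M *v w))" unfolding sym by (simp only: matrix_vector_mul_assoc)
  also have "\<dots> = (M *v w) \<bullet> (M *v w)" using sym_dot[OF sym] by simp
  finally show "w \<bullet> ((transpose M ** M) *v w) = (M *v w) \<bullet> (M *v w)" .
qed

lemma MtM_nonneg:
  fixes M :: "real^'n^'n"
  assumes sym: "transpose M = M"
  shows "0 \<le> Max (mat_eigenvalues (transpose M ** M))" "0 \<le> Min (mat_eigenvalues (transpose M ** M))"
proof -
  define B where "B = transpose M ** M"
  have e: "w \<bullet> (B *v w) = (M *v w) \<bullet> (M *v w)" for w unfolding B_def by (rule MtM(2)[OF sym])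
  have sB: "transpose B = B" unfolding B_def by (rule MtM(1)[OF sym])
  have nn: "0 \<le> l" if lin: "l \<in> mat_eigenvalues B" for l
  proof -
    obtain z where z: "z \<noteq> 0" "B *v z = l *\<^sub>R z" using lin unfolding mat_eigenvalues_def by auto
    have "l * (z \<bullet> z) = z \<bullet> (B *v z)" using z(2) by simp
    also have "\<dots> = (M *v z) \<bullet> (M *v z)" by (rule e)
    finally have "0 \<le> l * (z \<bullet> z)" by simp
    moreover have "z \<bullet> z > 0" using z(1) by simp
    ultimately show ?thesis by (simp add: zero_le_mult_iff)
  qed
  have "0 \<le> Max (mat_eigenvalues B)" "0 \<le> Min (mat_eigenvalues B)"
    using nn eig_Max_in[OF sB] by auto
  thus "0 \<le> Max (mat_eigenvalues (transpose M ** M))" "0 \<le> Min (mat_eigenvalues (transpose M ** M))"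
    unfolding B_def .
qed

lemma sigma_max_bound:
  fixes M :: "real^'n^'n"
  assumes sym: "transpose M = M"
  shows "norm (M *v w) \<le> sigma_max M * norm w" and "0 \<le> sigma_max M"
proof -
  define B where "B = transpose M ** M"
  have e: "w \<bullet> (B *v w) = (M *v w) \<bullet> (M *v w)" for w unfolding B_def by (rule MtM(2)[OF sym])
  have sB: "transpose B = B" unfolding B_def by (rule MtM(1)[OF sym])
  have L0: "0 \<le> Max (mat_eigenvalues B)" unfolding B_def by (rule MtM_nonneg(1)[OF sym])
  have sm: "sigma_max M = sqrt (Max (mat_eigenvalues B))" unfolding sigma_max_def B_def ..
  have "(norm (M *v w))^2 = w \<bullet> (B *v w)" unfolding e by (simp add: power2_norm_eq_inner)
  also have "\<dots> \<le> Max (mat_eigenvalues B) * (w \<bullet> w)" by (rule eig_max(2)[OF sB])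
  also have "\<dots> = (sigma_max M * norm w)^2"
    unfolding sm using L0 by (simp add: power_mult_distrib power2_norm_eq_inner)
  finally have "(norm (M *v w))^2 \<le> (sigma_max M * norm w)^2" .
  moreover have "0 \<le> sigma_max M * norm w" unfolding sm using L0 by simp
  ultimately show "norm (M *v w) \<le> sigma_max M * norm w" by (rule power2_le_imp_le)
  show "0 \<le> sigma_max M" unfolding sm using L0 by simp
qed

lemma sigma_min_bound:
  fixes M :: "real^'n^'n"
  assumes sym: "transpose M = M"
  shows "sigma_min M * norm w \<le> norm (M *v w)" and "0 \<le> sigma_min M"
proof -
  define B where "B = transpose M ** M"
  have e: "w \<bullet> (B *v w) = (M *v w) \<bullet> (M *v w)" for w unfolding B_def by (rule MtM(2)[OF sym])
  have sB: "transpose B = B" unfolding B_def by (rule MtM(1)[OF sym])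
  have L0: "0 \<le> Min (mat_eigenvalues B)" unfolding B_def by (rule MtM_nonneg(2)[OF sym])
  have sm: "sigma_min M = sqrt (Min (mat_eigenvalues B))" unfolding sigma_min_def B_def ..
  have "(sigma_min M * norm w)^2 = Min (mat_eigenvalues B) * (w \<bullet> w)"
    unfolding sm using L0 by (simp add: power_mult_distrib power2_norm_eq_inner)
  also have "\<dots> \<le> w \<bullet> (B *v w)" by (rule eig_min[OF sB])
  also have "\<dots> = (norm (M *v w))^2" unfolding e by (simp add: power2_norm_eq_inner)
  finally have "(sigma_min M * norm w)^2 \<le> (norm (M *v w))^2" .
  thus "sigma_min M * norm w \<le> norm (M *v w)" by (rule power2_le_imp_le) simp
  show "0 \<le> sigma_min M" unfolding sm using L0 by simp
qed

lemma rayleigh_sigma: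
  fixes M :: "real^'n^'n"
  assumes sym: "transpose M = M"
  shows "w \<bullet> (M *v w) \<le> sigma_max M * (w \<bullet> w)"
proof -
  have "w \<bullet> (M *v w) \<le> norm w * norm (M *v w)" by (rule norm_cauchy_schwarz)
  also have "\<dots> \<le> norm w * (sigma_max M * norm w)"
    using sigma_max_bound(1)[OF sym, of w] by (simp add: mult_left_mono)
  also have "\<dots> = sigma_max M * (w \<bullet> w)" by (simp add: power2_norm_eq_inner[symmetric] power2_eq_square)
  finally show ?thesis .
qed

lemma sigma_max_mono:
  fixes M1 M2 :: "real^'n^'n"
  assumes s1: "transpose M1 = M1" and s2: "transpose M2 = M2"
    and psd: "\<And>z. 0 \<le> z \<bullet> (M1 *v z)" and le: "\<And>z. z \<bullet> (M1 *v z) \<le> z \<bullet> (M2 *v z)"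
  shows "sigma_max M1 \<le> sigma_max M2"
proof -
  let ?mu = "Max (mat_eigenvalues (transpose M1 ** M1))"
  obtain z where z: "z \<noteq> 0" "(transpose M1 ** M1) *v z = ?mu *\<^sub>R z"
    using eig_Max_in(1)[OF MtM(1)[OF s1]] unfolding mat_eigenvalues_def by auto
  define t where "t = sigma_max M1"
  have t0: "0 \<le> t" unfolding t_def by (rule sigma_max_bound(2)[OF s1])
  have tt: "t * t = ?mu" unfolding t_def sigma_max_def using MtM_nonneg(1)[OF s1] by simp
  have MMz: "M1 *v (M1 *v z) = ?mu *\<^sub>R z" using z(2) unfolding s1 by (simp only: matrix_vector_mul_assoc)
  define y where "y = M1 *v z + t *\<^sub>R z"
  have My: "M1 *v y = t *\<^sub>R y"
  proof -
    have "M1 *v y = M1 *v (M1 *v z) + t *\<^sub>R (M1 *v z)"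
      unfolding y_def by (simp only: matrix_vector_right_distrib matrix_vector_mult_scaleR)
    also have "\<dots> = (t * t) *\<^sub>R z + t *\<^sub>R (M1 *v z)" using MMz tt by simp
    also have "\<dots> = t *\<^sub>R y" unfolding y_def by (simp add: scaleR_add_right)
    finally show ?thesis .
  qed
  show ?thesis
  proof (cases "y = 0")
    case True
    hence "M1 *v z = - (t *\<^sub>R z)" unfolding y_def by (simp only: add_eq_0_iff2)
    hence "M1 *v z = (-t) *\<^sub>R z" by simp
    hence a1: "0 \<le> -t * (z \<bullet> z)" using psd[of z] by simp
    have a2: "z \<bullet> z > 0" using z(1) by simp
    have "t \<le> 0"
    proof (rule ccontr)
      assume "\<not> t \<le> 0"
      hence "t * (z \<bullet> z) > 0" using a2 by simp
      thus False using a1 by simp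
    qed
    hence "t = 0" using t0 by simp
    thus ?thesis using sigma_max_bound(2)[OF s2] t_def by simp
  next
    case False
    have "t * (y \<bullet> y) = y \<bullet> (M1 *v y)" using My by simp
    also have "\<dots> \<le> y \<bullet> (M2 *v y)" by (rule le)
    also have "\<dots> \<le> sigma_max M2 * (y \<bullet> y)" by (rule rayleigh_sigma[OF s2])
    finally have "t * (y \<bullet> y) \<le> sigma_max M2 * (y \<bullet> y)" .
    moreover have "y \<bullet> y > 0" using False by simp
    ultimately show ?thesis unfolding t_def by simp
  qed
qed



lemma quad_expand:
  fixes A :: "real^'n^'n"
  assumes "transpose A = A"
  shows "(a + b) \<bullet> (A *v (a + b)) = a \<bullet> (A *v a) + 2 * (a \<bullet> (A *v b)) + b \<bullet> (A *v b)"
proof -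
  have "b \<bullet> (A *v a) = a \<bullet> (A *v b)" using sym_dot[OF assms, of b a] by (simp add: inner_commute)
  thus ?thesis by (simp add: matrix_vector_right_distrib inner_add_left inner_add_right)
qed

lemma quad_scale:
  fixes A :: "real^'n^'n"
  shows "(h *\<^sub>R b) \<bullet> (A *v (h *\<^sub>R b)) = h^2 * (b \<bullet> (A *v b))"
    and "a \<bullet> (A *v (h *\<^sub>R b)) = h * (a \<bullet> (A *v b))"
  by (simp_all add: matrix_vector_mult_scaleR power2_eq_square inner_scaleR_left inner_scaleR_right)

lemma transpose_lin:
  fixes Q A :: "real^'n^'n"
  shows "transpose (Q + c *\<^sub>R A) = transpose Q + c *\<^sub>R transpose A"
  by (simp add: transpose_def vec_eq_iff)

lemma mv_lin:
  fixes Q A :: "real^'n^'n"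
  shows "(Q + c *\<^sub>R A) *v z = Q *v z + c *\<^sub>R (A *v z)"
  by (simp add: matrix_vector_mult_add_rdistrib scaleR_matrix_vector_assoc)

lemma cont_mv[continuous_intros]:
  fixes A :: "real^'n^'m" and f :: "'a::euclidean_space \<Rightarrow> real^'n"
  assumes c: "continuous_on S f"
  shows "continuous_on S (\<lambda>x. A *v f x)"
  using linear_continuous_on_compose[OF c matrix_vector_mul_linear[of A]] by simp

lemma conv_arith:
  fixes h1 h2 U B E :: real
  assumes h1: "h1 < 0" and h2: "0 < h2" and E: "0 \<le> E"
    and i1: "U + 2*h1*B + h1^2*E \<le> 1" and i2: "U + 2*h2*B + h2^2*E \<le> 1"
  shows "U \<le> 1"
proof -
  have a: "h2 * (U + 2*h1*B + h1^2*E) \<le> h2 * 1" using i1 h2 by (intro mult_left_mono) auto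
  have b: "(-h1) * (U + 2*h2*B + h2^2*E) \<le> (-h1) * 1" using i2 h1 by (intro mult_left_mono) auto
  have "(h2 - h1) * U + E * ((h1 * h2) * (h1 - h2)) \<le> h2 - h1"
    using a b by (simp add: algebra_simps power2_eq_square)
  moreover have "0 \<le> E * ((h1 * h2) * (h1 - h2))"
  proof -
    have "h1 * h2 < 0" using h1 h2 by (simp add: mult_neg_pos)
    moreover have "h1 - h2 < 0" using h1 h2 by simp
    ultimately have "0 < (h1 * h2) * (h1 - h2)" by (simp add: mult_neg_neg)
    thus ?thesis using E by simp
  qed
  ultimately have "(h2 - h1) * U \<le> (h2 - h1) * 1" by simp
  thus ?thesis using h1 h2 by simp
qed

context
  fixes Q A :: "real^'n^'n" and q v :: "real^'n" and m \<gamma> :: real and k :: nat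
  assumes symQ: "transpose Q = Q" and psdQ: "\<And>x. 0 \<le> x \<bullet> (Q *v x)"
    and symA: "transpose A = A" and pdA: "\<And>x. x \<noteq> 0 \<Longrightarrow> 0 < x \<bullet> (A *v x)"
    and m0: "m > 0" and req: "requirement2 Q q A v m" and k1: "k \<ge> 1"
    and g0: "0 < \<gamma>" and gL: "\<gamma> \<le> 1 / Lk Q A m k"
begin

lemma psdA: "0 \<le> x \<bullet> (A *v x)"
  using pdA[of x] by (cases "x = 0") auto

lemma CS_A: "(y \<bullet> (A *v z))^2 \<le> (y \<bullet> (A *v y)) * (z \<bullet> (A *v z))"
proof (cases "z = 0")
  case True then show ?thesis by simp
next
  case False
  define c where "c = z \<bullet> (A *v z)"
  define b where "b = y \<bullet> (A *v z)"
  have c: "c > 0" using pdA[OF False] c_def by simp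
  define t where "t = - b / c"
  have "0 \<le> (y + t *\<^sub>R z) \<bullet> (A *v (y + t *\<^sub>R z))" by (rule psdA)
  also have "\<dots> = y \<bullet> (A *v y) + 2 * (t * b) + t^2 * c"
    unfolding quad_expand[OF symA] b_def c_def by (simp add: matrix_vector_mult_scaleR power2_eq_square)
  finally have i0: "0 \<le> y \<bullet> (A *v y) + 2 * (t * b) + t^2 * c" .
  have e1: "t * b = - (b^2 / c)" unfolding t_def by (simp add: power2_eq_square)
  have e2: "t^2 * c = b^2 / c" unfolding t_def using c by (simp add: power2_eq_square)
  have "0 \<le> y \<bullet> (A *v y) - b^2 / c" using i0 unfolding e1 e2 by simp
  hence "b^2 / c \<le> y \<bullet> (A *v y)" by simp
  hence "b^2 \<le> y \<bullet> (A *v y) * c" using c by (simp add: divide_le_eq)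
  thus ?thesis unfolding b_def c_def .
qed

lemma Lk_pos: "Lk Q A m k > 0"
proof (rule ccontr)
  assume "\<not> Lk Q A m k > 0"
  hence "1 / Lk Q A m k \<le> 0" by (simp add: divide_le_0_iff)
  thus False using g0 gL by linarith
qed

lemma gLk: "\<gamma> * Lk Q A m k \<le> 1"
  using gL Lk_pos by (simp add: le_divide_eq)

lemma symL: "transpose (Q + c *\<^sub>R A) = Q + c *\<^sub>R A"
  by (simp add: transpose_lin symQ symA)

lemma L1_le: "Lk Q A m 1 \<le> Lk Q A m k"
  unfolding Lk_def
proof (rule sigma_max_mono[OF symL symL])
  fix z :: "real^'n"
  show "0 \<le> z \<bullet> ((Q + (m * (4 * real 1 - 2)) *\<^sub>R A) *v z)"
    using psdQ[of z] psdA[of z] m0 by (simp add: mv_lin inner_add_right)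
  have "m * 2 * (z \<bullet> (A *v z)) \<le> m * (4 * real k - 2) * (z \<bullet> (A *v z))"
    using k1 m0 psdA[of z] by (intro mult_right_mono) auto
  thus "z \<bullet> ((Q + (m * (4 * real 1 - 2)) *\<^sub>R A) *v z) \<le> z \<bullet> ((Q + (m * (4 * real k - 2)) *\<^sub>R A) *v z)"
    by (simp add: mv_lin inner_add_right)
qed

lemma gL1: "\<gamma> * Lk Q A m 1 \<le> 1"
  using L1_le gLk g0 by (meson mult_left_mono less_imp_le order_trans)

lemma BL:
  assumes gx: "gcon A v x = 1"
  shows "gcon A v (x - \<gamma> *\<^sub>R grad_Jk Q q A v m k x) \<le> 1"
proof -
  define y where "y = x - v"
  define w where "w = grad_f Q q x + m *\<^sub>R grad_g A v x"
  define G where "G = grad_g A v x"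
  define smin where "smin = sigma_min A"
  define smax where "smax = sigma_max A"
  define L1 where "L1 = Lk Q A m 1"
  have Jw: "grad_Jk Q q A v m k x = w" unfolding grad_Jk_def w_def using gx by simp
  have Ny: "y \<bullet> (A *v y) = 1" using gx unfolding gcon_def y_def .
  have G2: "G = 2 *\<^sub>R (A *v y)" unfolding G_def grad_g_def y_def ..
  have req': "(norm w)^2 * norm G \<le> 2 * rA A * L1 * (w \<bullet> G)"
    using req gx unfolding requirement2_def w_def G_def L1_def Let_def by auto
  have wAy: "w \<bullet> G = 2 * (y \<bullet> (A *v w))"
    unfolding G2 using sym_dot[OF symA, of y w] by (simp add: inner_commute)
  have "gcon A v (x - \<gamma> *\<^sub>R w) = (y + (-\<gamma>) *\<^sub>R w) \<bullet> (A *v (y + (-\<gamma>) *\<^sub>R w))"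
    unfolding gcon_def y_def by (simp add: algebra_simps)
  also have "\<dots> = 1 - \<gamma> * (w \<bullet> G) + \<gamma>^2 * (w \<bullet> (A *v w))"
    unfolding quad_expand[OF symA] quad_scale Ny wAy by (simp add: power2_eq_square)
  finally have expd: "gcon A v (x - \<gamma> *\<^sub>R w) = 1 - \<gamma> * (w \<bullet> G) + \<gamma>^2 * (w \<bullet> (A *v w))" .
  have smin0: "0 \<le> smin" unfolding smin_def by (rule sigma_min_bound(2)[OF symA])
  have smax0: "0 \<le> smax" unfolding smax_def by (rule sigma_max_bound(2)[OF symA])
  have L10: "0 \<le> L1" unfolding L1_def Lk_def by (rule sigma_max_bound(2)[OF symL])
  have yAy: "1 \<le> norm y * norm (A *v y)" using Ny norm_cauchy_schwarz[of y "A *v y"] by simp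
  have lowA: "smin * norm y \<le> norm (A *v y)" unfolding smin_def by (rule sigma_min_bound(1)[OF symA])
  have upA: "norm (A *v y) \<le> smax * norm y" unfolding smax_def by (rule sigma_max_bound(1)[OF symA])
  have Ay0: "norm (A *v y) > 0" using yAy by (cases "A *v y = 0") auto
  have y0: "norm y > 0" using yAy by (cases "y = 0") auto
  have smaxp: "smax > 0"
  proof (rule ccontr)
    assume "\<not> smax > 0" hence "smax = 0" using smax0 by simp
    thus False using upA Ay0 by simp
  qed
  have "smin \<le> smin * (norm y * norm (A *v y))" using yAy smin0 by (simp add: mult_le_cancel_left1)
  also have "\<dots> = (smin * norm y) * norm (A *v y)" by simp
  also have "\<dots> \<le> norm (A *v y) * norm (A *v y)" using lowA Ay0 by (simp add: mult_right_mono)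
  finally have "smin \<le> (norm (A *v y))^2" by (simp add: power2_eq_square)
  hence sqs: "sqrt smin \<le> norm (A *v y)" by (simp add: real_le_lsqrt real_sqrt_le_iff real_le_rsqrt)
  have nG: "norm G = 2 * norm (A *v y)" unfolding G2 by simp
  have G0: "norm G > 0" using nG Ay0 by simp
  have rA: "smax * rA A = sqrt smin" unfolding rA_def smin_def[symmetric] smax_def[symmetric] using smaxp by simp
  have wG0: "0 \<le> w \<bullet> G"
  proof (cases "rA A * L1 > 0")
    case True
    have "0 \<le> (norm w)^2 * norm G" by simp
    hence "0 \<le> 2 * rA A * L1 * (w \<bullet> G)" using req' by linarith
    moreover have "2 * rA A * L1 * (w \<bullet> G) = 2 * ((rA A * L1) * (w \<bullet> G))" by (simp only: mult.assoc)
    ultimately have "0 \<le> (rA A * L1) * (w \<bullet> G)" by linarith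
    thus ?thesis using True by (simp add: zero_le_mult_iff)
  next
    case False
    have "0 \<le> rA A" unfolding rA_def smin_def[symmetric] smax_def[symmetric] using smin0 smax0 by simp
    hence "0 \<le> rA A * L1" using L10 by simp
    hence "rA A * L1 = 0" using False by linarith
    hence "2 * rA A * L1 * (w \<bullet> G) = 0" by (simp only: mult.assoc mult_zero_left mult_zero_right)
    hence "(norm w)^2 * norm G \<le> 0" using req' by linarith
    hence "w = 0" using G0 by (simp add: mult_le_0_iff)
    thus ?thesis by simp
  qed
  have key: "\<gamma> * (w \<bullet> (A *v w)) \<le> w \<bullet> G"
  proof -
    have "\<gamma> * (w \<bullet> (A *v w)) * norm G \<le> \<gamma> * (smax * (w \<bullet> w)) * norm G"
      using rayleigh_sigma[OF symA, of w] g0 G0 unfolding smax_def by simp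
    also have "\<dots> = (\<gamma> * smax) * ((norm w)^2 * norm G)" by (simp add: power2_norm_eq_inner)
    also have "\<dots> \<le> (\<gamma> * smax) * (2 * rA A * L1 * (w \<bullet> G))"
      using req' g0 smax0 by (intro mult_left_mono) auto
    also have "\<dots> = 2 * (\<gamma> * L1) * (sqrt smin * (w \<bullet> G))" using rA by (simp add: algebra_simps)
    also have "\<dots> \<le> 2 * 1 * (sqrt smin * (w \<bullet> G))"
      using gL1 wG0 smin0 unfolding L1_def by (intro mult_right_mono mult_left_mono) auto
    also have "\<dots> \<le> 2 * norm (A *v y) * (w \<bullet> G)" using sqs wG0 by (simp add: mult_right_mono)
    also have "\<dots> = (w \<bullet> G) * norm G" using nG by simp
    finally show ?thesis using G0 by simp
  qed
  have "gcon A v (x - \<gamma> *\<^sub>R w) \<le> 1"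
  proof -
    have "\<gamma>^2 * (w \<bullet> (A *v w)) = \<gamma> * (\<gamma> * (w \<bullet> (A *v w)))" by (simp add: power2_eq_square)
    also have "\<dots> \<le> \<gamma> * (w \<bullet> G)" using key g0 by simp
    finally show ?thesis using expd by simp
  qed
  thus ?thesis using Jw by simp
qed

lemma interior_k1:
  assumes k: "k = 1" and gx: "gcon A v x < 1"
  shows "gcon A v (x - \<gamma> *\<^sub>R grad_Jk Q q A v m k x) \<le> 1"
proof -
  define y where "y = x - v"
  define s where "s = gcon A v x"
  have sy: "s = y \<bullet> (A *v y)" unfolding s_def gcon_def y_def ..
  have s0: "0 \<le> s" unfolding sy by (rule psdA)
  have s1: "s < 1" using gx s_def by simp
  obtain i :: 'n where True by simp
  define d where "d = (axis i 1 :: real^'n)"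
  have d0: "d \<noteq> 0" unfolding d_def by (metis norm_axis_1 norm_zero zero_neq_one)
  define c where "c = d \<bullet> (A *v d)"
  have c0: "c > 0" unfolding c_def by (rule pdA[OF d0])
  define b where "b = y \<bullet> (A *v d)"
  define R where "R = sqrt (b^2 + c * (1 - s))"
  have Rb: "\<bar>b\<bar> < R"
  proof -
    have "b^2 < b^2 + c * (1 - s)" using c0 s1 by simp
    hence "sqrt (b^2) < R" unfolding R_def by (rule real_sqrt_less_mono)
    thus ?thesis by simp
  qed
  have R2: "R^2 = b^2 + c * (1 - s)" unfolding R_def
    by (rule real_sqrt_pow2) (use c0 s1 in \<open>simp add: add_nonneg_nonneg\<close>)
  define h1 where "h1 = (-b - R) / c"
  define h2 where "h2 = (-b + R) / c"
  have h1n: "h1 < 0" unfolding h1_def using Rb c0 by (simp add: divide_neg_pos)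
  have h2p: "h2 > 0" unfolding h2_def using Rb c0 by simp
  have on: "gcon A v (x + h *\<^sub>R d) = s + 2*h*b + h^2*c" for h
  proof -
    have "gcon A v (x + h *\<^sub>R d) = (y + h *\<^sub>R d) \<bullet> (A *v (y + h *\<^sub>R d))"
      unfolding gcon_def y_def by (simp add: algebra_simps)
    also have "\<dots> = s + 2*h*b + h^2*c" unfolding quad_expand[OF symA] quad_scale sy b_def c_def by (simp add: power2_eq_square)
    finally show ?thesis .
  qed
  have root: "s + 2*h*b + h^2*c = 1" if hc: "h * c + b = R \<or> h * c + b = - R" for h
  proof -
    have "(h*c + b)^2 = R^2" using hc by auto
    hence "c * (2*h*b + h^2*c) = c * (1 - s)" using R2 by (simp add: power2_eq_square algebra_simps)
    hence "2*h*b + h^2*c = 1 - s" using c0 by simp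
    thus ?thesis by simp
  qed
  have r1: "gcon A v (x + h1 *\<^sub>R d) = 1" unfolding on
    by (rule root) (use c0 in \<open>simp add: h1_def\<close>)
  have r2: "gcon A v (x + h2 *\<^sub>R d) = 1" unfolding on
    by (rule root) (use c0 in \<open>simp add: h2_def\<close>)
  define u where "u = x - \<gamma> *\<^sub>R grad_Jk Q q A v m k x - v"
  define e where "e = d - \<gamma> *\<^sub>R (Q *v d + (2*m) *\<^sub>R (A *v d))"
  have gJ: "grad_Jk Q q A v m k p = Q *v p + q + (2*m) *\<^sub>R (A *v p) - (2*m) *\<^sub>R (A *v v)" for p
    unfolding grad_Jk_def grad_f_def grad_g_def k by (simp add: matrix_vector_mult_diff_distrib algebra_simps)
  have aff: "(x + h *\<^sub>R d) - \<gamma> *\<^sub>R grad_Jk Q q A v m k (x + h *\<^sub>R d) - v = u + h *\<^sub>R e" for h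
    unfolding u_def e_def gJ by (simp add: matrix_vector_right_distrib matrix_vector_mult_scaleR algebra_simps)
  have Phi: "gcon A v ((x + h *\<^sub>R d) - \<gamma> *\<^sub>R grad_Jk Q q A v m k (x + h *\<^sub>R d))
      = u \<bullet> (A *v u) + 2*h*(u \<bullet> (A *v e)) + h^2*(e \<bullet> (A *v e))" for h
  proof -
    have "gcon A v ((x + h *\<^sub>R d) - \<gamma> *\<^sub>R grad_Jk Q q A v m k (x + h *\<^sub>R d)) = (u + h *\<^sub>R e) \<bullet> (A *v (u + h *\<^sub>R e))"
      unfolding gcon_def aff ..
    also have "\<dots> = u \<bullet> (A *v u) + 2*h*(u \<bullet> (A *v e)) + h^2*(e \<bullet> (A *v e))"
      unfolding quad_expand[OF symA] quad_scale by (simp add: power2_eq_square)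
    finally show ?thesis .
  qed
  have i1: "u \<bullet> (A *v u) + 2*h1*(u \<bullet> (A *v e)) + h1^2*(e \<bullet> (A *v e)) \<le> 1"
    using BL[OF r1] unfolding Phi .
  have i2: "u \<bullet> (A *v u) + 2*h2*(u \<bullet> (A *v e)) + h2^2*(e \<bullet> (A *v e)) \<le> 1"
    using BL[OF r2] unfolding Phi .
  have "u \<bullet> (A *v u) \<le> 1" by (rule conv_arith[OF h1n h2p psdA i1 i2])
  moreover have "gcon A v (x - \<gamma> *\<^sub>R grad_Jk Q q A v m k x) = u \<bullet> (A *v u)"
    unfolding gcon_def u_def ..
  ultimately show ?thesis by simp
qed

lemma lmin_pos: "Min (mat_eigenvalues A) > 0"
proof -
  obtain z where z: "z \<noteq> 0" "A *v z = Min (mat_eigenvalues A) *\<^sub>R z"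
    using eig_Max_in(2)[OF symA] unfolding mat_eigenvalues_def by auto
  have "0 < z \<bullet> (A *v z)" by (rule pdA[OF z(1)])
  also have "\<dots> = Min (mat_eigenvalues A) * (z \<bullet> z)" using z(2) by simp
  finally have "0 < Min (mat_eigenvalues A) * (z \<bullet> z)" .
  moreover have "0 < z \<bullet> z" using z(1) by simp
  ultimately show ?thesis by (simp add: zero_less_mult_iff)
qed

lemma cont_g: "continuous_on S (gcon A v)"
  unfolding gcon_def by (intro continuous_intros)

lemma C_compact: "compact {p. gcon A v p \<le> 1}"
proof -
  have cl: "closed {p. gcon A v p \<le> 1}"
    by (rule closed_Collect_le[OF cont_g continuous_on_const])
  define mu where "mu = Min (mat_eigenvalues A)"
  have mu: "mu > 0" unfolding mu_def by (rule lmin_pos)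
  have "{p. gcon A v p \<le> 1} \<subseteq> cball v (1 + 1/mu)"
  proof
    fix p assume "p \<in> {p. gcon A v p \<le> 1}"
    hence g1: "(p - v) \<bullet> (A *v (p - v)) \<le> 1" unfolding gcon_def by simp
    have "mu * ((p - v) \<bullet> (p - v)) \<le> (p - v) \<bullet> (A *v (p - v))"
      unfolding mu_def by (rule eig_min[OF symA])
    hence "mu * (norm (p - v))^2 \<le> 1" using g1 by (simp add: power2_norm_eq_inner)
    hence n2: "(norm (p - v))^2 \<le> 1 / mu" using mu by (simp add: le_divide_eq mult.commute)
    have "norm (p - v) \<le> 1 + 1/mu"
    proof (cases "norm (p - v) \<le> 1")
      case True
      have "0 \<le> 1/mu" using mu by simp
      then show ?thesis using True by linarith
    next
      case False
      hence "norm (p - v) * 1 \<le> norm (p - v) * norm (p - v)" by (intro mult_left_mono) auto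
      hence "norm (p - v) \<le> (norm (p - v))^2" by (simp add: power2_eq_square)
      thus ?thesis using n2 mu by simp
    qed
    thus "p \<in> cball v (1 + 1/mu)" by (simp add: dist_norm norm_minus_commute)
  qed
  hence "bounded {p. gcon A v p \<le> 1}" using bounded_cball bounded_subset by blast
  thus ?thesis using cl by (simp add: compact_eq_bounded_closed)
qed

lemma cont_Phi: "continuous_on S (\<lambda>p. gcon A v (p - \<gamma> *\<^sub>R grad_Jk Q q A v m k p))"
  unfolding gcon_def grad_Jk_def grad_f_def grad_g_def by (intro continuous_intros)

lemma maxp:
  assumes k2: "k \<ge> 2" and px: "gcon A v p \<le> 1"
  shows "gcon A v (p - \<gamma> *\<^sub>R grad_Jk Q q A v m k p) \<le> 1"
proof -
  let ?C = "{p. gcon A v p \<le> 1}"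
  define Phi where "Phi p = gcon A v (p - \<gamma> *\<^sub>R grad_Jk Q q A v m k p)" for p
  have ne: "?C \<noteq> {}"
  proof -
    have "gcon A v v = 0" unfolding gcon_def by simp
    hence "v \<in> ?C" by simp
    thus ?thesis by blast
  qed
  obtain xs where xs: "xs \<in> ?C" and mx: "\<forall>p\<in>?C. Phi p \<le> Phi xs"
    using continuous_attains_sup[OF C_compact ne cont_Phi] unfolding Phi_def by blast
  have "Phi xs \<le> 1"
  proof (cases "gcon A v xs = 1")
    case True thus ?thesis using BL unfolding Phi_def by blast
  next
    case False
    define s where "s = gcon A v xs"
    have s1: "s < 1" using xs False s_def by simp
    define y where "y = xs - v"
    have sy: "s = y \<bullet> (A *v y)" unfolding s_def gcon_def y_def ..
    have s0: "0 \<le> s" unfolding sy by (rule psdA)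
    define u where "u = xs - \<gamma> *\<^sub>R grad_Jk Q q A v m k xs - v"
    have Pu: "Phi xs = u \<bullet> (A *v u)" unfolding Phi_def gcon_def u_def ..
    define z where "z = A *v u"
    show ?thesis
    proof (cases "z = 0")
      case True then have "Phi xs = 0" using Pu z_def by simp
      thus ?thesis by simp
    next
      case False
      define c where "c = z \<bullet> (A *v z)"
      have c0: "c > 0" using pdA[OF False] c_def by simp
      define a where "a = y \<bullet> (A *v z)"
      have za: "z \<bullet> (A *v y) = a" unfolding a_def using sym_dot[OF symA, of z y] by (simp add: inner_commute)
      define S where "S h = s + 2*h*a + h^2*c" for h
      have gS: "gcon A v (xs + h *\<^sub>R z) = S h" for h
      proof -
        have "gcon A v (xs + h *\<^sub>R z) = (y + h *\<^sub>R z) \<bullet> (A *v (y + h *\<^sub>R z))"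
          unfolding gcon_def y_def by (simp add: algebra_simps)
        also have "\<dots> = S h" unfolding quad_expand[OF symA] quad_scale sy a_def c_def S_def
          by (simp add: power2_eq_square)
        finally show ?thesis .
      qed
      define psi where "psi = (\<lambda>h. h*(z \<bullet> z) - \<gamma>*(h*(z \<bullet> (Q *v z)) + 2*m*(s + 2*h*a + h^2*c)^(k-1)*(a + h*c) - 2*m * s^(k-1)*a))"
      have grow: "Phi xs + 2 * psi h \<le> Phi (xs + h *\<^sub>R z)" for h
      proof -
        define G1 where "G1 = grad_Jk Q q A v m k (xs + h *\<^sub>R z)"
        define G0 where "G0 = grad_Jk Q q A v m k xs"
        define D where "D = h *\<^sub>R z - \<gamma> *\<^sub>R (G1 - G0)"
        have PD: "Phi (xs + h *\<^sub>R z) = (u + D) \<bullet> (A *v (u + D))"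
        proof -
          have "xs + h *\<^sub>R z - \<gamma> *\<^sub>R G1 - v = u + D" unfolding u_def D_def G0_def[symmetric]
            by (simp add: algebra_simps)
          thus ?thesis unfolding Phi_def gcon_def G1_def by simp
        qed
        have uAD: "u \<bullet> (A *v D) = z \<bullet> D" using sym_dot[OF symA, of u D] z_def by simp
        have e1: "xs + h *\<^sub>R z - v = y + h *\<^sub>R z" unfolding y_def by (simp add: algebra_simps)
        have gX: "G1 = Q *v xs + h *\<^sub>R (Q *v z) + q + (m * (S h)^(k-1) * 2) *\<^sub>R (A *v y + h *\<^sub>R (A *v z))"
          unfolding G1_def grad_Jk_def grad_f_def grad_g_def gS e1
          by (simp add: matrix_vector_right_distrib matrix_vector_mult_scaleR)
        have gx: "G0 = Q *v xs + q + (m * s^(k-1) * 2) *\<^sub>R (A *v y)"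
          unfolding G0_def grad_Jk_def grad_f_def grad_g_def s_def[symmetric] y_def[symmetric] by simp
        have zG1: "z \<bullet> G1 = z \<bullet> (Q *v xs) + h * (z \<bullet> (Q *v z)) + z \<bullet> q + (m * (S h)^(k-1) * 2) * (a + h * c)"
          unfolding gX c_def by (simp add: inner_add_right za)
        have zG0: "z \<bullet> G0 = z \<bullet> (Q *v xs) + z \<bullet> q + (m * s^(k-1) * 2) * a"
          unfolding gx by (simp add: inner_add_right za)
        have zD: "z \<bullet> D = psi h"
        proof -
          have "z \<bullet> D = h * (z \<bullet> z) - \<gamma> * (z \<bullet> G1 - z \<bullet> G0)"
            unfolding D_def by (simp add: inner_diff_right)
          also have "\<dots> = psi h" unfolding zG1 zG0 psi_def S_def by (simp add: algebra_simps)
          finally show ?thesis .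
        qed
        have "Phi (xs + h *\<^sub>R z) = u \<bullet> (A *v u) + 2 * (u \<bullet> (A *v D)) + D \<bullet> (A *v D)"
          unfolding PD quad_expand[OF symA] ..
        also have "\<dots> = Phi xs + 2 * psi h + D \<bullet> (A *v D)" unfolding uAD zD Pu ..
        finally show ?thesis using psdA[of D] by simp
      qed
      define dpsi where "dpsi = z \<bullet> z - \<gamma>*(z \<bullet> (Q *v z) + 2*m*(real (k-1) * (2*a * s^(k-1-1)) * a + s^(k-1)*c))"
      have der: "DERIV psi 0 :> dpsi"
        unfolding psi_def dpsi_def
        apply (rule derivative_eq_intros refl | simp)+
        apply (simp add: algebra_simps)
        done
      obtain j where kj: "k = j + 2" using k2 by (metis add.commute le_add_diff_inverse)
      have k1j: "k - 1 = Suc j" and k2j: "k - 1 - 1 = j" using kj by auto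
      have CS: "a^2 \<le> s * c" using CS_A[of y z] unfolding sy a_def c_def .
      have sj: "s^j * a^2 \<le> s^j * (s * c)" using CS s0 by (simp add: mult_left_mono)
      have sjn: "0 \<le> s^j" using s0 by simp
      have sl: "s^(Suc j) < 1" using s0 s1 power_less_one_iff[of s "Suc j"] by blast
      define T where "T = real (k-1) * (2*a * s^(k-1-1)) * a + s^(k-1)*c"
      have T1: "T = 2 * real (Suc j) * (s^j * a^2) + s^(Suc j) * c"
        unfolding T_def k1j k2j by (simp add: power2_eq_square algebra_simps)
      have "T \<le> 2 * real (Suc j) * (s^j * (s * c)) + s^(Suc j) * c"
      proof -
        have "2 * real (Suc j) * (s^j * a^2) \<le> 2 * real (Suc j) * (s^j * (s * c))"
          by (rule mult_left_mono[OF sj]) simp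
        thus ?thesis unfolding T1 by simp
      qed
      also have "\<dots> = (2 * real j + 3) * (s^(Suc j) * c)" by (simp add: algebra_simps)
      also have "\<dots> < (2 * real j + 3) * c"
        using sl c0 by (intro mult_strict_left_mono) auto
      finally have Tl: "T < (2 * real j + 3) * c" .
      have Lz: "z \<bullet> (Q *v z) + m * (4 * real k - 2) * c \<le> Lk Q A m k * (z \<bullet> z)"
        using rayleigh_sigma[OF symL[of "m * (4 * real k - 2)"], of z]
        unfolding Lk_def c_def by (simp add: mv_lin inner_add_right)
      have "2*m*T < 2*m*((2 * real j + 3) * c)" using Tl m0 by simp
      also have "2*m*((2 * real j + 3) * c) = m * (4 * real k - 2) * c" using kj by (simp add: algebra_simps)
      finally have "z \<bullet> (Q *v z) + 2*m*T < Lk Q A m k * (z \<bullet> z)" using Lz by linarith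
      hence "\<gamma> * (z \<bullet> (Q *v z) + 2*m*T) < \<gamma> * (Lk Q A m k * (z \<bullet> z))" using g0 by simp
      also have "\<dots> = (\<gamma> * Lk Q A m k) * (z \<bullet> z)" by simp
      also have "\<dots> \<le> 1 * (z \<bullet> z)" using gLk by (intro mult_right_mono) auto
      finally have dpos: "dpsi > 0" unfolding dpsi_def T_def by simp
      obtain d where d: "d > 0" and dd: "\<forall>h>0. h < d \<longrightarrow> psi 0 < psi (0 + h)"
        using DERIV_pos_inc_right[OF der dpos] by blast
      have psi0: "psi 0 = 0" unfolding psi_def by simp
      define h where "h = min (d/2) (min 1 ((1 - s) / (2 * \<bar>a\<bar> + c + 1)))"
      have den: "2 * \<bar>a\<bar> + c + 1 > 0" using c0 by simp
      have hp: "h > 0" unfolding h_def using d s1 den by simp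
      have hd: "h < d" unfolding h_def using d by simp
      have h1: "h \<le> 1" unfolding h_def by simp
      have hb: "h \<le> (1 - s) / (2 * \<bar>a\<bar> + c + 1)" unfolding h_def by simp
      hence hb': "h * (2 * \<bar>a\<bar> + c + 1) \<le> 1 - s" using den by (simp add: le_divide_eq)
      have psipos: "psi h > 0" using dd hp hd psi0 by auto
      have "S h \<le> 1"
      proof -
        have "2*h*a \<le> 2*h*\<bar>a\<bar>" using hp by simp
        moreover have "h^2*c \<le> h*c" using hp h1 c0 by (simp add: power2_eq_square mult_right_mono)
        ultimately have "S h \<le> s + h * (2 * \<bar>a\<bar> + c + 1) - h" unfolding S_def by (simp add: algebra_simps)
        thus ?thesis using hb' hp by linarith
      qed
      hence "xs + h *\<^sub>R z \<in> ?C" using gS by simp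
      hence "Phi (xs + h *\<^sub>R z) \<le> Phi xs" using mx by blast
      moreover have "Phi xs + 2 * psi h \<le> Phi (xs + h *\<^sub>R z)" by (rule grow)
      ultimately show ?thesis using psipos by linarith
    qed
  qed
  moreover have "p \<in> ?C" using px by simp
  ultimately show ?thesis using mx unfolding Phi_def by fastforce
qed

end

theorem proposition2:
  fixes Q A :: "real^'n^'n" and q v x :: "real^'n" and m \<gamma> :: real and k :: nat
  assumes "sym_psd Q" and "sym_pd A"
    and "m > 0" and "requirement2 Q q A v m"
    and "k \<ge> 1"
    and "0 < \<gamma>" and "\<gamma> \<le> 1 / Lk Q A m k"
    and "gcon A v x \<le> 1"
  shows "gcon A v (x - \<gamma> *\<^sub>R grad_Jk Q q A v m k x) \<le> 1"
proof -
  have symQ: "transpose Q = Q" and psdQ: "\<And>x. 0 \<le> x \<bullet> (Q *v x)"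
    using assms(1) unfolding sym_psd_def by auto
  have symA: "transpose A = A" and pdA: "\<And>x. x \<noteq> 0 \<Longrightarrow> 0 < x \<bullet> (A *v x)"
    using assms(2) unfolding sym_pd_def by auto
  note ctx = symQ psdQ symA pdA assms(3) assms(4) assms(5) assms(6) assms(7)
  show ?thesis
  proof (cases "gcon A v x = 1")
    case True
    show ?thesis by (rule BL[OF ctx True])
  next
    case False
    hence lt: "gcon A v x < 1" using assms(8) by simp
    show ?thesis
    proof (cases "k = 1")
      case True
      show ?thesis by (rule interior_k1[OF ctx True lt])
    next
      case False
      hence "k \<ge> 2" using assms(5) by simp
      show ?thesis by (rule maxp[OF ctx \<open>k \<ge> 2\<close> assms(8)])
    qed
  qed
qed

end
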